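(* (1) Every combinatorial $k$-parameter $\mathbf x=(k,S,\Lambda)$ is $\aleph_{k+1}$-free. (2) If $\mathbf x=(k,S,\Lambda,\mathbf a)$ is an abelian group $k$-parameter such that the combinatorial parameter $(k,S,\Lambda)$ is free, then $G_{\mathbf x}$ is a free abelian group.
   Context: For a set $S$, ${}^\omega S$ is the set of all functions $\omega\to S$. A combinatorial $k$-parameter is a triple $(k,S,\Lambda)$ with $k<\omega$, $S$ a set and $\Lambda\subseteq {}^{k+1}({}^\omega S)$ (sequences $\bar\eta=\langle\eta_0,\dots,\eta_k\rangle$, $\eta_\ell\in{}^\omega S$). An abelian group $k$-parameter is $\mathbf x=(k,S,\Lambda,\mathbf a)$ with $(k,S,\Lambda)$ a combinatorial $k$-parameter and $\mathbf a:\Lambda\times\omega\to\mathbb Z$, $\mathbf a_{\bar\eta,n}=\mathbf a(\bar\eta,n)$. For $\bar\eta\in\Lambda$, $m\le k$, $n<\omega$, $\bar\eta\upharpoonleft\langle m,n\rangle$ is the sequence obtained from $\bar\eta$ by replacing $\eta_m$ with $\eta_m\restriction n$. $\Lambda_m=\{\bar\eta\upharpoonleft\langle m,n\rangle:\bar\eta\in\Lambda,n<\omega\}$, $\Lambda_{\le k}=\bigcup_{m\le k}\Lambda_m$. $G_{\mathbf x}$ is the abelian group generated by $z$, $x_{\bar\nu}$ ($\bar\nu\in\Lambda_{\le k}$), $y_{\bar\eta,n}$ ($\bar\eta\in\Lambda,n<\omega$) freely except for the relations $(n!)y_{\bar\eta,n+1}=y_{\bar\eta,n}+\mathbf a_{\bar\eta,n}z+\sum_{m\le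 k}x_{\bar\eta\upharpoonleft\langle m,n\rangle}$ ($\bar\eta\in\Lambda$, $n<\omega$). A combinatorial $k$-parameter $(k,S,\Lambda)$ is free if there is an enumeration $\langle\bar\eta^\alpha:\alpha<\alpha( * )\rangle$ of $\Lambda$ such that for every $\alpha<\alpha( * )$ there are $m\le k$ and $n<\omega$ with $\bar\eta^\alpha\upharpoonleft\langle m,n\rangle\notin\{\bar\eta^\beta\upharpoonleft\langle m,n\rangle:\beta<\alpha\}$. It is $\theta$-free if $(k,S,\Lambda')$ is free for every $\Lambda'\subseteq\Lambda$ with $|\Lambda'|<\theta$. *)

theory Defs
  imports "HOL-Algebra.Free_Abelian_Groups" "HOL-Algebra.Coset"
begin

(* An element eta of ^omega S is a function nat => 's (with values in S).
   A (k+1)-tuple bar-eta is a list of length k+1 of such functions.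
   Coordinates of tuples of the form  bar-eta |` <m,n>  are either infinite
   sequences or finite sequences; both are encoded uniformly as
   nat => 's option: an infinite sequence eta as (%i. Some (eta i)), the finite
   sequence eta|n as (%i. if i < n then Some (eta i) else None).
   This encoding is injective and keeps finite and infinite sequences apart. *)

definition seq_full :: "(nat \<Rightarrow> 's) \<Rightarrow> (nat \<Rightarrow> 's option)" where
  "seq_full \<eta> = (\<lambda>i. Some (\<eta> i))"

definition seq_restr :: "(nat \<Rightarrow> 's) \<Rightarrow> nat \<Rightarrow> (nat \<Rightarrow> 's option)" where
  "seq_restr \<eta> n = (\<lambda>i. if i < n then Some (\<eta> i) else None)"

definition tup_restr :: "(nat \<Rightarrow> 's) list \<Rightarrow> nat \<Rightarrow> nat \<Rightarrow> (nat \<Rightarrow> 's option) list" where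
  "tup_restr \<eta>s m n =
     map (\<lambda>l. if l = m then seq_restr (\<eta>s ! l) n else seq_full (\<eta>s ! l)) [0..<length \<eta>s]"

definition comb_param :: "nat \<Rightarrow> 's set \<Rightarrow> (nat \<Rightarrow> 's) list set \<Rightarrow> bool" where
  "comb_param k S \<Lambda> \<longleftrightarrow>
     (\<forall>\<eta>s\<in>\<Lambda>. length \<eta>s = Suc k \<and> (\<forall>l<Suc k. \<forall>i. (\<eta>s ! l) i \<in> S))"

definition Lambda_m :: "(nat \<Rightarrow> 's) list set \<Rightarrow> nat \<Rightarrow> (nat \<Rightarrow> 's option) list set" where
  "Lambda_m \<Lambda> m = {tup_restr \<eta>s m n | \<eta>s n. \<eta>s \<in> \<Lambda>}"

definition Lambda_le :: "nat \<Rightarrow> (nat \<Rightarrow> 's) list set \<Rightarrow> (nat \<Rightarrow> 's option) list set" where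
  "Lambda_le k \<Lambda> = (\<Union>m\<in>{0..k}. Lambda_m \<Lambda> m)"

text \<open>Freeness: an enumeration of Lambda indexed by an ordinal is the same as a
  well-order r on Lambda; the elements enumerated before eta are those in
  underS r eta.\<close>
definition comb_free :: "nat \<Rightarrow> (nat \<Rightarrow> 's) list set \<Rightarrow> bool" where
  "comb_free k \<Lambda> \<longleftrightarrow>
     (\<exists>r. well_order_on \<Lambda> r \<and>
        (\<forall>\<eta>s\<in>\<Lambda>. \<exists>m\<le>k. \<exists>n.
           tup_restr \<eta>s m n \<notin> (\<lambda>\<nu>s. tup_restr \<nu>s m n) ` Order_Relation.underS r \<eta>s))"

text \<open>card_le_aleph k A  means  |A| <= aleph_k.\<close>
fun card_le_aleph :: "nat \<Rightarrow> 'a set \<Rightarrow> bool" where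
  "card_le_aleph 0 A = countable A"
| "card_le_aleph (Suc k) A =
     (\<exists>r. well_order_on A r \<and> (\<forall>a\<in>A. card_le_aleph k (Order_Relation.underS r a)))"

text \<open>theta-free for theta = aleph_{k+1}: every subset of cardinality < aleph_{k+1},
  i.e. of cardinality <= aleph_k, is free.\<close>
definition aleph_Suc_free :: "nat \<Rightarrow> (nat \<Rightarrow> 's) list set \<Rightarrow> bool" where
  "aleph_Suc_free k \<Lambda> \<longleftrightarrow>
     (\<forall>\<Lambda>'. \<Lambda>' \<subseteq> \<Lambda> \<and> card_le_aleph k \<Lambda>' \<longrightarrow> comb_free k \<Lambda>')"

datatype 's gen = GZ | GX "(nat \<Rightarrow> 's option) list" | GY "(nat \<Rightarrow> 's) list" nat

definition gens :: "nat \<Rightarrow> (nat \<Rightarrow> 's) list set \<Rightarrow> 's gen set" where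
  "gens k \<Lambda> = {GZ} \<union> GX ` Lambda_le k \<Lambda> \<union> {GY \<eta>s n | \<eta>s n. \<eta>s \<in> \<Lambda>}"

definition rel_elem :: "nat \<Rightarrow> ((nat \<Rightarrow> 's) list \<Rightarrow> nat \<Rightarrow> int) \<Rightarrow> (nat \<Rightarrow> 's) list \<Rightarrow> nat
    \<Rightarrow> ('s gen \<Rightarrow>\<^sub>0 int)" where
  "rel_elem k a \<eta>s n =
     frag_cmul (int (fact n)) (frag_of (GY \<eta>s (Suc n))) - frag_of (GY \<eta>s n)
     - frag_cmul (a \<eta>s n) (frag_of GZ) - (\<Sum>m\<in>{0..k}. frag_of (GX (tup_restr \<eta>s m n)))"

definition rels :: "nat \<Rightarrow> ((nat \<Rightarrow> 's) list \<Rightarrow> nat \<Rightarrow> int) \<Rightarrow> (nat \<Rightarrow> 's) list set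
    \<Rightarrow> ('s gen \<Rightarrow>\<^sub>0 int) set" where
  "rels k a \<Lambda> = {rel_elem k a \<eta>s n | \<eta>s n. \<eta>s \<in> \<Lambda>}"

definition G_x :: "nat \<Rightarrow> (nat \<Rightarrow> 's) list set \<Rightarrow> ((nat \<Rightarrow> 's) list \<Rightarrow> nat \<Rightarrow> int)
    \<Rightarrow> ('s gen \<Rightarrow>\<^sub>0 int) set monoid" where
  "G_x k \<Lambda> a = free_Abelian_group (gens k \<Lambda>)
     Mod (generate (free_Abelian_group (gens k \<Lambda>)) (rels k a \<Lambda>))"

text \<open>A group is free abelian iff it is isomorphic to the free abelian group on some set
  (a basis of cardinality at most that of the carrier suffices, so taking the basis set in
  the carrier's element type loses nothing).\<close>
definition free_abelian :: "('a, 'm) monoid_scheme \<Rightarrow> bool" where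
  "free_abelian G \<longleftrightarrow> (\<exists>B :: 'a set. G \<cong> free_Abelian_group B)"

end

theory Submission
  imports Defs
begin


lemma finite_wf_maximal:
  assumes "wf R" "finite K" "K \<noteq> {}"
  shows "\<exists>i\<in>K. \<forall>j\<in>K. (i,j) \<notin> R"
proof -
  have fin: "finite (R \<inter> K \<times> K)" using assms(2) by (simp add: finite_Int)
  have "acyclic (R \<inter> K \<times> K)" using wf_acyclic[OF assms(1)] acyclic_subset by blast
  then have w: "wf ((R \<inter> K \<times> K)\<inverse>)" by (rule finite_acyclic_wf_converse[OF fin])
  obtain i where "i \<in> K" "\<And>j. (j,i) \<in> (R \<inter> K \<times> K)\<inverse> \<Longrightarrow> j \<notin> K"
    using wfE_min[OF w, of _ K] assms(3) by blast
  then show ?thesis by blast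
qed

lemma triangular_quotient:
  fixes X :: "'x set" and I :: "'i set" and rel :: "'i \<Rightarrow> 'x \<Rightarrow>\<^sub>0 int" and L :: "'i \<Rightarrow> 'x"
  assumes keys_rel: "\<And>i. i \<in> I \<Longrightarrow> Poly_Mapping.keys (rel i) \<subseteq> X"
    and LX: "\<And>i. i \<in> I \<Longrightarrow> L i \<in> X"
    and injL: "inj_on L I"
    and unit: "\<And>i. i \<in> I \<Longrightarrow> poly_mapping.lookup (rel i) (L i) = 1 \<or> poly_mapping.lookup (rel i) (L i) = -1"
    and wfR: "wf R"
    and tri: "\<And>i j. i \<in> I \<Longrightarrow> j \<in> I \<Longrightarrow> L j \<in> Poly_Mapping.keys (rel i) \<Longrightarrow> j \<noteq> i \<Longrightarrow> (j,i) \<in> R"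
  shows "free_Abelian_group X Mod generate (free_Abelian_group X) (rel ` I) \<cong> free_Abelian_group (X - L ` I)"
proof -
  define F where "F = free_Abelian_group X"
  define N where "N = generate F (rel ` I)"
  interpret F: comm_group F unfolding F_def by (rule abelian_free_Abelian_group)
  have relF: "rel ` I \<subseteq> carrier F" using keys_rel by (auto simp: F_def)
  have subN: "subgroup N F" unfolding N_def by (rule F.generate_is_subgroup[OF relF])
  have NF: "\<And>a. a \<in> N \<Longrightarrow> Poly_Mapping.keys a \<subseteq> X"
    using subgroup.subset[OF subN] unfolding F_def by (auto simp del: carrier_free_Abelian_group_iff) (metis carrier_free_Abelian_group_iff subsetD)
  have N0: "0 \<in> N" using subgroup.one_closed[OF subN] by (simp add: F_def)
  have Ndiff: "a - b \<in> N" if "a \<in> N" "b \<in> N" for a b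
  proof -
    have "inv\<^bsub>F\<^esub> b \<in> N" using subgroup.m_inv_closed[OF subN that(2)] .
    then have "a \<otimes>\<^bsub>F\<^esub> inv\<^bsub>F\<^esub> b \<in> N" using subgroup.m_closed[OF subN that(1)] by blast
    then show ?thesis using NF[OF that(2)] by (simp add: F_def)
  qed
  have Ncmul: "frag_cmul c a \<in> N" if "a \<in> N" for a c
    by (rule frag_closure_minus_cmul[where P="\<lambda>x. x \<in> N"]) (use N0 Ndiff that in auto)
  have Nrel: "rel i \<in> N" if "i \<in> I" for i
    unfolding N_def using that by (auto intro: generate.incl)
  have stepA: "\<exists>c. Poly_Mapping.keys c \<subseteq> I \<and> a = frag_extend rel c" if "a \<in> N" for a
    using that unfolding N_def
  proof (induction rule: generate.induct)
    case one
    then show ?case by (rule exI[of _ 0]) (simp add: F_def)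
  next
    case (incl h)
    then obtain i where "i \<in> I" "h = rel i" by blast
    then show ?case by (intro exI[of _ "frag_of i"]) simp
  next
    case (inv h)
    then obtain i where i: "i \<in> I" "h = rel i" by blast
    then have "inv\<^bsub>F\<^esub> h = - rel i" using keys_rel[OF i(1)] by (simp add: F_def)
    then show ?case using i by (intro exI[of _ "- frag_of i"]) (simp add: frag_extend_minus)
  next
    case (eng h1 h2)
    then obtain c1 c2 where "Poly_Mapping.keys c1 \<subseteq> I" "h1 = frag_extend rel c1"
      "Poly_Mapping.keys c2 \<subseteq> I" "h2 = frag_extend rel c2" by blast
    then show ?case
      by (intro exI[of _ "c1 + c2"]) (auto simp: F_def frag_extend_add dest: subsetD[OF keys_add])
  qed
  have stepB: "c = 0" if c: "Poly_Mapping.keys c \<subseteq> I"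
      and disj: "Poly_Mapping.keys (frag_extend rel c) \<inter> L ` I = {}" for c
  proof (rule ccontr)
    assume "c \<noteq> 0"
    then have ne: "Poly_Mapping.keys c \<noteq> {}" by simp
    obtain i where i: "i \<in> Poly_Mapping.keys c" and max: "\<And>j. j \<in> Poly_Mapping.keys c \<Longrightarrow> (i,j) \<notin> R"
      using finite_wf_maximal[OF wfR finite_keys ne] by blast
    have iI: "i \<in> I" using i c by blast
    have "poly_mapping.lookup (frag_extend rel c) (L i)
        = (\<Sum>j\<in>Poly_Mapping.keys c. poly_mapping.lookup c j * poly_mapping.lookup (rel j) (L i))"
      by (simp add: frag_extend_def lookup_sum)
    also have "\<dots> = poly_mapping.lookup c i * poly_mapping.lookup (rel i) (L i)"
    proof -
      have z: "poly_mapping.lookup c j * poly_mapping.lookup (rel j) (L i) = 0"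
        if j: "j \<in> Poly_Mapping.keys c - {i}" for j
      proof -
        have "L i \<notin> Poly_Mapping.keys (rel j)"
          using tri[of j i] j max[of j] iI c by blast
        then show ?thesis by (simp add: in_keys_iff)
      qed
      show ?thesis
        by (simp add: sum.remove[OF finite_keys i] sum.neutral z)
    qed
    finally have "poly_mapping.lookup (frag_extend rel c) (L i) \<noteq> 0"
      using unit[OF iI] i by (auto simp: in_keys_iff)
    then have "L i \<in> Poly_Mapping.keys (frag_extend rel c)" by (simp add: in_keys_iff)
    then show False using disj iI by blast
  qed
  have NB: "a = 0" if aN: "a \<in> N" and aK: "Poly_Mapping.keys a \<subseteq> X - L ` I" for a
  proof -
    obtain c where c: "Poly_Mapping.keys c \<subseteq> I" "a = frag_extend rel c" using stepA[OF aN] by blast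
    have "Poly_Mapping.keys (frag_extend rel c) \<inter> L ` I = {}" using aK c(2) by blast
    then have "c = 0" using stepB[OF c(1)] by blast
    then show ?thesis using c(2) by simp
  qed
  have stepC: "i \<in> I \<longrightarrow> (\<exists>v. Poly_Mapping.keys v \<subseteq> X - L ` I \<and> frag_of (L i) - v \<in> N)" for i
  proof (induction i rule: wf_induct[OF wfR])
    case (1 i)
    show ?case
    proof
      assume iI: "i \<in> I"
      define u where "u = poly_mapping.lookup (rel i) (L i)"
      define rest where "rest = rel i - frag_cmul u (frag_of (L i))"
      have uu: "u * u = 1" using unit[OF iI] by (auto simp: u_def)
      have krest: "Poly_Mapping.keys rest \<subseteq> Poly_Mapping.keys (rel i) - {L i}"
      proof
        fix x assume x: "x \<in> Poly_Mapping.keys rest"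
        have "x \<in> Poly_Mapping.keys (rel i)"
          using x by (auto simp: rest_def in_keys_iff lookup_minus u_def split: if_splits)
        moreover have "x \<noteq> L i" using x by (auto simp: rest_def in_keys_iff lookup_minus u_def)
        ultimately show "x \<in> Poly_Mapping.keys (rel i) - {L i}" by blast
      qed
      have Q: "\<exists>v. Poly_Mapping.keys v \<subseteq> X - L ` I \<and> w - v \<in> N"
        if "Poly_Mapping.keys w \<subseteq> Poly_Mapping.keys (rel i) - {L i}" for w
        using that
      proof (induction w rule: frag_induction)
        case zero
        then show ?case using N0 by (intro exI[of _ 0]) simp
      next
        case (one x)
        then have xX: "x \<in> X" using keys_rel[OF iI] by blast
        show ?case
        proof (cases "x \<in> L ` I")
          case False
          then show ?thesis using xX N0 by (intro exI[of _ "frag_of x"]) simp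
        next
          case True
          then obtain j where j: "j \<in> I" "x = L j" by blast
          have "j \<noteq> i" using one j by blast
          then have "(j,i) \<in> R" using tri[OF iI j(1)] one j by blast
          then show ?thesis using 1 j by blast
        qed
      next
        case (diff a b)
        then obtain va vb where "Poly_Mapping.keys va \<subseteq> X - L ` I" "a - va \<in> N"
          "Poly_Mapping.keys vb \<subseteq> X - L ` I" "b - vb \<in> N" by blast
        then show ?case
          by (intro exI[of _ "va - vb"]) (auto dest: subsetD[OF keys_diff] Ndiff[of "a - va" "b - vb"] simp: algebra_simps)
      qed
      obtain v where v: "Poly_Mapping.keys v \<subseteq> X - L ` I" "rest - v \<in> N" using Q[OF krest] by blast
      have eq: "frag_of (L i) = frag_cmul u (rel i) - frag_cmul u rest"
        by (rule poly_mapping_eqI) (simp add: rest_def lookup_minus right_diff_distrib mult.assoc[symmetric] uu)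
      have "frag_of (L i) - frag_cmul (-u) v = frag_cmul u (rel i) - frag_cmul u (rest - v)"
        by (subst eq, rule poly_mapping_eqI) (simp add: lookup_minus lookup_add algebra_simps)
      also have "\<dots> \<in> N" using Ndiff Ncmul Nrel[OF iI] v(2) by blast
      finally show "\<exists>v. Poly_Mapping.keys v \<subseteq> X - L ` I \<and> frag_of (L i) - v \<in> N"
        using v(1) keys_cmul[of "-u" v] by blast
    qed
  qed
  have stepC': "\<exists>v. Poly_Mapping.keys v \<subseteq> X - L ` I \<and> w - v \<in> N" if "Poly_Mapping.keys w \<subseteq> X" for w
    using that
  proof (induction w rule: frag_induction)
    case zero
    then show ?case using N0 by (intro exI[of _ 0]) simp
  next
    case (one x)
    show ?case
    proof (cases "x \<in> L ` I")
      case False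
      then show ?thesis using one N0 by (intro exI[of _ "frag_of x"]) simp
    next
      case True
      then show ?thesis using stepC by blast
    qed
  next
    case (diff a b)
    then obtain va vb where "Poly_Mapping.keys va \<subseteq> X - L ` I" "a - va \<in> N"
      "Poly_Mapping.keys vb \<subseteq> X - L ` I" "b - vb \<in> N" by blast
    then show ?case
      by (intro exI[of _ "va - vb"]) (auto dest: subsetD[OF keys_diff] Ndiff[of "a - va" "b - vb"] simp: algebra_simps)
  qed
  interpret NN: normal N F using F.subgroup_imp_normal[OF subN] .
  define S where "S = free_Abelian_group (X - L ` I)"
  define h where "h = (\<lambda>v. N #>\<^bsub>F\<^esub> v)"
  have SF: "\<And>v. v \<in> carrier S \<Longrightarrow> v \<in> carrier F" by (auto simp: S_def F_def)
  have hom: "h \<in> hom S (F Mod N)"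
  proof (rule homI)
    fix x assume "x \<in> carrier S"
    then show "h x \<in> carrier (F Mod N)"
      using hom_in_carrier[OF NN.r_coset_hom_Mod] SF by (auto simp: h_def)
  next
    fix x y assume "x \<in> carrier S" "y \<in> carrier S"
    then show "h (x \<otimes>\<^bsub>S\<^esub> y) = h x \<otimes>\<^bsub>F Mod N\<^esub> h y"
      using hom_mult[OF NN.r_coset_hom_Mod, of x y] SF by (simp add: h_def S_def F_def)
  qed
  have inj: "inj_on h (carrier S)"
  proof (rule inj_onI)
    fix x y assume x: "x \<in> carrier S" and y: "y \<in> carrier S" and e: "h x = h y"
    have "x \<in> N #>\<^bsub>F\<^esub> y" using F.rcos_self[OF SF[OF x] subN] e by (simp add: h_def)
    then have "x \<otimes>\<^bsub>F\<^esub> inv\<^bsub>F\<^esub> y \<in> N"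
      using subgroup.rcos_module_imp[OF subN F.is_group SF[OF y]] by blast
    moreover have "inv\<^bsub>F\<^esub> y = - y" using SF[OF y] by (simp add: F_def)
    ultimately have "x - y \<in> N" by (simp add: F_def)
    have "Poly_Mapping.keys (x - y) \<subseteq> X - L ` I"
      using x y keys_diff[of x y] by (auto simp: S_def)
    then show "x = y" using NB[OF \<open>x - y \<in> N\<close>] by simp
  qed
  have surj: "h ` carrier S = carrier (F Mod N)"
  proof
    show "h ` carrier S \<subseteq> carrier (F Mod N)" using hom_in_carrier[OF hom] by blast
  next
    show "carrier (F Mod N) \<subseteq> h ` carrier S"
    proof
      fix C assume "C \<in> carrier (F Mod N)"
      then obtain w where w: "w \<in> carrier F" "C = N #>\<^bsub>F\<^esub> w" by (auto simp: carrier_FactGroup)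
      obtain v where v: "Poly_Mapping.keys v \<subseteq> X - L ` I" "w - v \<in> N"
        using stepC'[of w] w(1) by (auto simp: F_def)
      have vF: "v \<in> carrier F" using v(1) by (auto simp: F_def)
      have "inv\<^bsub>F\<^esub> v = - v" using vF by (simp add: F_def)
      then have "w \<otimes>\<^bsub>F\<^esub> inv\<^bsub>F\<^esub> v \<in> N" using v by (simp add: F_def)
      then have "w \<in> N #>\<^bsub>F\<^esub> v" using subgroup.rcos_module_rev[OF subN F.is_group vF w(1)] by blast
      then have "N #>\<^bsub>F\<^esub> v = N #>\<^bsub>F\<^esub> w" using F.repr_independence[OF _ vF subN] by blast
      moreover have "v \<in> carrier S" using v(1) by (simp add: S_def)
      ultimately show "C \<in> h ` carrier S" using w(2) unfolding h_def by (intro image_eqI[where x=v]) simp_all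
    qed
  qed
  have "S \<cong> F Mod N"
    using is_isoI[OF isoI[OF hom]] inj surj by (simp add: bij_betw_def)
  then have "F Mod N \<cong> S" by (rule group.iso_sym[OF group_free_Abelian_group[of "X - L ` I", folded S_def]])
  then show ?thesis by (simp add: F_def N_def S_def)
qed



lemma length_tup_restr[simp]: "length (tup_restr \<eta>s m n) = length \<eta>s"
  by (simp add: tup_restr_def)

lemma nth_tup_restr: "l < length \<eta>s \<Longrightarrow> tup_restr \<eta>s m n ! l =
   (if l = m then seq_restr (\<eta>s ! l) n else seq_full (\<eta>s ! l))"
  by (simp add: tup_restr_def)

lemma seq_restr_eq_iff: "seq_restr a n = seq_restr b n' \<longleftrightarrow> n = n' \<and> (\<forall>i<n. a i = b i)"
proof
  assume e: "seq_restr a n = seq_restr b n'"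
  have "n = n'"
  proof (rule ccontr)
    assume "n \<noteq> n'"
    then have "n < n' \<or> n' < n" by arith
    then show False
    proof
      assume "n < n'" then show False using fun_cong[OF e, of n] by (simp add: seq_restr_def)
    next
      assume "n' < n" then show False using fun_cong[OF e, of n'] by (simp add: seq_restr_def)
    qed
  qed
  moreover have "\<forall>i<n. a i = b i"
    using e \<open>n = n'\<close> by (auto simp: seq_restr_def fun_eq_iff split: if_splits)
  ultimately show "n = n' \<and> (\<forall>i<n. a i = b i)" by blast
qed (auto simp: seq_restr_def fun_eq_iff)

lemma seq_restr_ne_full: "seq_restr a n \<noteq> seq_full b"
  by (auto simp: seq_restr_def seq_full_def fun_eq_iff intro!: exI[of _ n])

lemma seq_full_eq_iff: "seq_full a = seq_full b \<longleftrightarrow> a = b"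
  by (auto simp: seq_full_def fun_eq_iff)

lemma tup_restr_eqD:
  assumes e: "tup_restr \<eta>s m n = tup_restr \<nu>s m' n'" and m: "m < length \<eta>s" and m': "m' < length \<nu>s"
  shows "m = m' \<and> n = n' \<and> length \<eta>s = length \<nu>s"
proof -
  have len: "length \<eta>s = length \<nu>s" using arg_cong[OF e, of length] by simp
  have "tup_restr \<eta>s m n ! m = tup_restr \<nu>s m' n' ! m" using e by simp
  then have mm: "m = m'" using m len by (auto simp: nth_tup_restr seq_restr_ne_full split: if_splits)
  have "tup_restr \<eta>s m n ! m = tup_restr \<nu>s m' n' ! m" using e by simp
  then have "n = n'" using m len mm by (auto simp: nth_tup_restr seq_restr_eq_iff)
  then show ?thesis using mm len by blast
qed

lemma tup_restr_mono:
  assumes e: "tup_restr \<eta>s m n' = tup_restr \<nu>s m n'" and "n \<le> n'"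
  shows "tup_restr \<eta>s m n = tup_restr \<nu>s m n"
proof -
  have len: "length \<eta>s = length \<nu>s" using arg_cong[OF e, of length] by simp
  have "tup_restr \<eta>s m n ! l = tup_restr \<nu>s m n ! l" if l: "l < length \<eta>s" for l
  proof -
    have "tup_restr \<eta>s m n' ! l = tup_restr \<nu>s m n' ! l" using e by simp
    then show ?thesis using l len assms(2)
      by (auto simp: nth_tup_restr seq_restr_eq_iff seq_full_eq_iff split: if_splits)
  qed
  then show ?thesis using len by (intro nth_equalityI) auto
qed

lemma lookup_rel_elem:
  "poly_mapping.lookup (rel_elem k a \<eta>s n) x =
     int (fact n) * (if x = GY \<eta>s (Suc n) then 1 else 0) - (if x = GY \<eta>s n then 1 else 0)
     - a \<eta>s n * (if x = GZ then 1 else 0) - (\<Sum>m\<in>{0..k}. if x = GX (tup_restr \<eta>s m n) then 1 else 0)"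
  by (simp add: rel_elem_def lookup_minus lookup_sum)

lemma keys_rel_elem:
  "Poly_Mapping.keys (rel_elem k a \<eta>s n) \<subseteq>
     {GY \<eta>s (Suc n), GY \<eta>s n, GZ} \<union> (\<lambda>m. GX (tup_restr \<eta>s m n)) ` {0..k}"
proof
  fix x assume x: "x \<in> Poly_Mapping.keys (rel_elem k a \<eta>s n)"
  show "x \<in> {GY \<eta>s (Suc n), GY \<eta>s n, GZ} \<union> (\<lambda>m. GX (tup_restr \<eta>s m n)) ` {0..k}"
  proof (rule ccontr)
    assume nx: "x \<notin> {GY \<eta>s (Suc n), GY \<eta>s n, GZ} \<union> (\<lambda>m. GX (tup_restr \<eta>s m n)) ` {0..k}"
    then have "(\<Sum>m\<in>{0..k}. if x = GX (tup_restr \<eta>s m n) then 1 else (0::int)) = 0"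
      by (intro sum.neutral) auto
    then have "poly_mapping.lookup (rel_elem k a \<eta>s n) x = 0"
      using nx unfolding lookup_rel_elem by auto
    then show False using x by (simp add: in_keys_iff)
  qed
qed

lemma sum_indicator_unique:
  assumes "m0 \<in> A" "finite A" "\<And>m. m \<in> A \<Longrightarrow> P m \<longleftrightarrow> m = m0"
  shows "(\<Sum>m\<in>A. if P m then 1 else 0) = (1::int)"
proof -
  have "(\<Sum>m\<in>A. if P m then 1 else 0) = (\<Sum>m\<in>A. if m = m0 then 1 else (0::int))"
    using assms(3) by (intro sum.cong) auto
  then show ?thesis using assms(1,2) by simp
qed

theorem part2:
  fixes k :: nat and S :: "'s set" and \<Lambda> :: "(nat \<Rightarrow> 's) list set"
    and a :: "(nat \<Rightarrow> 's) list \<Rightarrow> nat \<Rightarrow> int"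
  assumes cp: "comb_param k S \<Lambda>" and cf: "comb_free k \<Lambda>"
  shows "free_abelian (G_x k \<Lambda> a)"
proof -
  have len: "\<And>\<eta>s. \<eta>s \<in> \<Lambda> \<Longrightarrow> length \<eta>s = Suc k" using cp by (auto simp: comb_param_def)
  obtain r where wo: "well_order_on \<Lambda> r" and fr: "\<forall>\<eta>s\<in>\<Lambda>. \<exists>m\<le>k. \<exists>n.
           tup_restr \<eta>s m n \<notin> (\<lambda>\<nu>s. tup_restr \<nu>s m n) ` underS r \<eta>s"
    using cf by (auto simp: comb_free_def)
  obtain m0 n0 where m0: "\<And>\<eta>s. \<eta>s \<in> \<Lambda> \<Longrightarrow> m0 \<eta>s \<le> k"
    and n0: "\<And>\<eta>s. \<eta>s \<in> \<Lambda> \<Longrightarrow> tup_restr \<eta>s (m0 \<eta>s) (n0 \<eta>s) \<notin> (\<lambda>\<nu>s. tup_restr \<nu>s (m0 \<eta>s) (n0 \<eta>s)) ` underS r \<eta>s"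
    using fr by metis
  have lin: "linear_order_on \<Lambda> r" and wfr: "wf (r - Id)" using wo by (auto simp: well_order_on_def)
  have tot: "total_on \<Lambda> r" using lin by (simp add: linear_order_on_def)
  have prec: "(\<eta>', \<eta>) \<in> r"
    if "\<eta> \<in> \<Lambda>" "\<eta>' \<in> \<Lambda>" "\<eta> \<noteq> \<eta>'" "n0 \<eta>' \<le> n'" "tup_restr \<eta>' (m0 \<eta>') n' = tup_restr \<eta> m n" "m \<le> k"
    for \<eta> \<eta>' m n n'
  proof (rule ccontr)
    assume "(\<eta>', \<eta>) \<notin> r"
    then have "(\<eta>, \<eta>') \<in> r" using tot that(1-3) by (auto simp: total_on_def)
    then have u: "\<eta> \<in> underS r \<eta>'" using that(3) by (simp add: underS_def)
    have "m0 \<eta>' = m \<and> n' = n" using tup_restr_eqD[OF that(5)] len that m0 by force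
    then have "tup_restr \<eta>' (m0 \<eta>') n' = tup_restr \<eta> (m0 \<eta>') n'" using that(5) by simp
    then have "tup_restr \<eta>' (m0 \<eta>') (n0 \<eta>') = tup_restr \<eta> (m0 \<eta>') (n0 \<eta>')"
      using tup_restr_mono that(4) by metis
    then show False using n0[OF that(2)] u by (metis image_eqI)
  qed
  define I where "I = \<Lambda> \<times> (UNIV :: nat set)"
  define rel where "rel = (\<lambda>(\<eta>::(nat \<Rightarrow> 's) list, n::nat). rel_elem k a \<eta> n)"
  define L where "L = (\<lambda>(\<eta>::(nat \<Rightarrow> 's) list, n::nat). if n0 \<eta> \<le> n then GX (tup_restr \<eta> (m0 \<eta>) n) else GY \<eta> n)"
  define R where "R = inv_image ((r - Id) <*lex*> less_than) (\<lambda>(\<eta>::(nat \<Rightarrow> 's) list, n::nat). (\<eta>, n0 \<eta> - n))"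
  have GX_in: "GX (tup_restr \<eta> m n) \<in> gens k \<Lambda>" if "\<eta> \<in> \<Lambda>" "m \<le> k" for \<eta> m n
  proof -
    have "tup_restr \<eta> m n \<in> Lambda_m \<Lambda> m" using that(1) by (auto simp: Lambda_m_def)
    then have "tup_restr \<eta> m n \<in> Lambda_le k \<Lambda>" using that(2) by (auto simp: Lambda_le_def)
    then show ?thesis by (simp add: gens_def)
  qed
  have GY_in: "GY \<eta> n \<in> gens k \<Lambda>" if "\<eta> \<in> \<Lambda>" for \<eta> n
    using that by (auto simp: gens_def)
  have GZ_in: "GZ \<in> gens k \<Lambda>" by (simp add: gens_def)
  have "G_x k \<Lambda> a \<cong> free_Abelian_group (gens k \<Lambda> - L ` I)"
  proof -
    have rels_eq: "rels k a \<Lambda> = rel ` I" by (auto simp: rels_def rel_def I_def)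
    have "free_Abelian_group (gens k \<Lambda>) Mod generate (free_Abelian_group (gens k \<Lambda>)) (rel ` I)
          \<cong> free_Abelian_group (gens k \<Lambda> - L ` I)"
    proof (rule triangular_quotient)
      fix i assume "i \<in> I"
      then obtain \<eta> n where i: "i = (\<eta>, n)" "\<eta> \<in> \<Lambda>" by (auto simp: I_def)
      show "Poly_Mapping.keys (rel i) \<subseteq> gens k \<Lambda>"
        using keys_rel_elem[of k a \<eta> n] i GX_in GY_in GZ_in by (auto simp: rel_def)
      show "L i \<in> gens k \<Lambda>" using i GX_in GY_in m0 by (auto simp: L_def)
      have lk: "m < Suc k" if "m \<le> k" for m using that by simp
      show "poly_mapping.lookup (rel i) (L i) = 1 \<or> poly_mapping.lookup (rel i) (L i) = -1"
      proof (cases "n0 \<eta> \<le> n")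
        case True
        have "(\<Sum>m\<in>{0..k}. if GX (tup_restr \<eta> (m0 \<eta>) n) = GX (tup_restr \<eta> m n) then 1 else 0) = (1::int)"
        proof (rule sum_indicator_unique)
          show "m0 \<eta> \<in> {0..k}" using m0[OF i(2)] by simp
          fix m assume "m \<in> {0..k}"
          then show "(GX (tup_restr \<eta> (m0 \<eta>) n) = GX (tup_restr \<eta> m n)) = (m = m0 \<eta>)"
            using tup_restr_eqD[of \<eta> "m0 \<eta>" n \<eta> m n] len[OF i(2)] m0[OF i(2)] by auto
        qed simp
        then show ?thesis using True i by (simp add: rel_def L_def lookup_rel_elem)
      next
        case False
        then show ?thesis using i by (simp add: rel_def L_def lookup_rel_elem)
      qed
    next
      show "inj_on L I"
      proof (rule inj_onI)
        fix i j assume "i \<in> I" "j \<in> I" and e: "L i = L j"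
        then obtain \<eta> n \<eta>' n' where ij: "i = (\<eta>, n)" "j = (\<eta>', n')" "\<eta> \<in> \<Lambda>" "\<eta>' \<in> \<Lambda>"
          by (auto simp: I_def)
        show "i = j"
        proof (cases "n0 \<eta> \<le> n")
          case True
          then have T': "n0 \<eta>' \<le> n'" using e ij by (auto simp: L_def split: if_splits)
          have e2: "tup_restr \<eta> (m0 \<eta>) n = tup_restr \<eta>' (m0 \<eta>') n'" using e ij True T' by (simp add: L_def)
          then have mn: "m0 \<eta> = m0 \<eta>' \<and> n = n'" using tup_restr_eqD[OF e2] len ij m0 by force
          have "\<eta> = \<eta>'"
          proof (rule ccontr)
            assume ne: "\<eta> \<noteq> \<eta>'"
            have "(\<eta>', \<eta>) \<in> r" using prec[OF ij(3) ij(4) ne T', of "m0 \<eta>" n] e2 mn m0[OF ij(3)] by simp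
            moreover have "(\<eta>, \<eta>') \<in> r" using prec[OF ij(4) ij(3) ne[symmetric] True, of "m0 \<eta>'" n'] e2 mn m0[OF ij(4)] by simp
            ultimately show False using ne lin by (auto simp: linear_order_on_def partial_order_on_def antisym_def)
          qed
          then show ?thesis using ij mn by simp
        next
          case False
          then show ?thesis using e ij by (auto simp: L_def split: if_splits)
        qed
      qed
    next
      show "wf R" unfolding R_def by (intro wf_inv_image wf_lex_prod wfr wf_less_than)
    next
      fix i j assume iI: "i \<in> I" and jI: "j \<in> I" and kj: "L j \<in> Poly_Mapping.keys (rel i)" and ne: "j \<noteq> i"
      obtain \<eta> n \<eta>' n' where ij: "i = (\<eta>, n)" "j = (\<eta>', n')" "\<eta> \<in> \<Lambda>" "\<eta>' \<in> \<Lambda>"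
        using iI jI by (auto simp: I_def)
      have kk: "L j \<in> {GY \<eta> (Suc n), GY \<eta> n, GZ} \<union> (\<lambda>m. GX (tup_restr \<eta> m n)) ` {0..k}"
        using kj keys_rel_elem[of k a \<eta> n] ij by (auto simp: rel_def)
      show "(j, i) \<in> R"
      proof (cases "n0 \<eta>' \<le> n'")
        case True
        then have Lj: "L j = GX (tup_restr \<eta>' (m0 \<eta>') n')" using ij by (simp add: L_def)
        then obtain m where m: "m \<le> k" "tup_restr \<eta>' (m0 \<eta>') n' = tup_restr \<eta> m n" using kk by auto
        have mn: "m0 \<eta>' = m \<and> n' = n" using tup_restr_eqD[OF m(2)] len ij m0 m by force
        have "\<eta>' \<noteq> \<eta>"
        proof
          assume "\<eta>' = \<eta>"
          then show False using ne ij mn by simp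
        qed
        then have "(\<eta>', \<eta>) \<in> r" using prec[OF ij(3) ij(4) _ True m(2) m(1)] by metis
        then show ?thesis using \<open>\<eta>' \<noteq> \<eta>\<close> ij by (simp add: R_def)
      next
        case False
        then have Lj: "L j = GY \<eta>' n'" using ij by (simp add: L_def)
        then have "(\<eta>' = \<eta> \<and> n' = Suc n) \<or> (\<eta>' = \<eta> \<and> n' = n)" using kk by auto
        then have "\<eta>' = \<eta> \<and> n' = Suc n" using ne ij by auto
        then show ?thesis using False ij by (simp add: R_def)
      qed
    qed
    then show ?thesis by (simp add: G_x_def rels_eq)
  qed
  also have "\<dots> \<cong> free_Abelian_group ((\<lambda>g. {frag_of g}) ` (gens k \<Lambda> - L ` I))"
  proof -
    have "inj_on (\<lambda>g::'s gen. {frag_of g}) (gens k \<Lambda> - L ` I)"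
      by (auto simp: inj_on_def frag_of_eq)
    then have "gens k \<Lambda> - L ` I \<approx> (\<lambda>g. {frag_of g}) ` (gens k \<Lambda> - L ` I)"
      using inj_on_image_eqpoll_self eqpoll_sym by blast
    then show ?thesis using isomorphic_free_Abelian_groups by blast
  qed
  finally show ?thesis unfolding free_abelian_def by blast
qed



lemma wo_pull:
  assumes wo: "well_order_on C r" and inj: "inj_on g A" and sub: "g ` A \<subseteq> C"
  shows "well_order_on A {(x,y). x \<in> A \<and> y \<in> A \<and> (g x, g y) \<in> r}"
proof -
  let ?rA = "{(x,y). x \<in> A \<and> y \<in> A \<and> (g x, g y) \<in> r}"
  have lin: "linear_order_on C r" and wfr: "wf (r - Id)" using wo by (auto simp: well_order_on_def)
  have refl: "refl_on C r" and tr: "trans r" and as: "antisym r" and tot: "total_on C r"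
    using lin by (auto simp: linear_order_on_def partial_order_on_def preorder_on_def)
  have "linear_order_on A ?rA"
    unfolding linear_order_on_def partial_order_on_def preorder_on_def
  proof (intro conjI)
    show "?rA \<subseteq> A \<times> A" by auto
    show "refl_on A ?rA" using refl sub by (auto simp: refl_on_def)
    show "trans ?rA" using tr by (auto simp: trans_def)
    show "antisym ?rA" using as inj by (auto simp: antisym_def inj_on_def)
    show "total_on A ?rA" unfolding total_on_def
    proof (intro ballI impI)
      fix x y assume "x \<in> A" "y \<in> A" "x \<noteq> y"
      then have "g x \<in> C" "g y \<in> C" "g x \<noteq> g y" using inj sub by (auto simp: inj_on_def)
      then show "(x, y) \<in> ?rA \<or> (y, x) \<in> ?rA" using tot \<open>x \<in> A\<close> \<open>y \<in> A\<close> by (auto simp: total_on_def)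
    qed
  qed
  moreover have "wf (?rA - Id)"
  proof (rule wf_subset[OF wf_inv_image[OF wfr, of g]])
    show "?rA - Id \<subseteq> inv_image (r - Id) g"
    proof
      fix p assume "p \<in> ?rA - Id"
      then obtain x y where p: "p = (x,y)" "x \<in> A" "y \<in> A" "(g x, g y) \<in> r" "x \<noteq> y" by auto
      then have "g x \<noteq> g y" using inj by (auto dest: inj_onD)
      then show "p \<in> inv_image (r - Id) g" using p by (simp add: inv_image_def)
    qed
  qed
  ultimately show ?thesis unfolding well_order_on_def by blast
qed

lemma nat_wo: "well_order_on (UNIV::nat set) {(x,y). x \<le> y}"
  using natLeq_Well_order Field_natLeq by (simp add: natLeq_def)

lemma card_le_aleph_inj:
  "inj_on g A \<Longrightarrow> g ` A \<subseteq> C \<Longrightarrow> card_le_aleph j C \<Longrightarrow> card_le_aleph j A"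
proof (induction j arbitrary: A C g)
  case 0
  then show ?case using countable_subset countable_image_inj_on by (metis card_le_aleph.simps(1))
next
  case (Suc j)
  obtain r where wo: "well_order_on C r" and us: "\<forall>c\<in>C. card_le_aleph j (underS r c)"
    using Suc.prems(3) by auto
  let ?rA = "{(x,y). x \<in> A \<and> y \<in> A \<and> (g x, g y) \<in> r}"
  have "well_order_on A ?rA" using wo_pull[OF wo Suc.prems(1,2)] .
  moreover have "card_le_aleph j (underS ?rA a)" if a: "a \<in> A" for a
  proof (rule Suc.IH[of g _ "underS r (g a)"])
    show "inj_on g (underS ?rA a)" using Suc.prems(1) by (rule inj_on_subset) (auto simp: underS_def)
    show "g ` underS ?rA a \<subseteq> underS r (g a)" using Suc.prems(1) a by (auto simp: underS_def inj_on_def)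
    show "card_le_aleph j (underS r (g a))" using us Suc.prems(2) a by auto
  qed
  ultimately show ?case by auto
qed

lemma countable_wo:
  assumes "countable A"
  shows "\<exists>r. well_order_on A r \<and> (\<forall>a\<in>A. finite (underS r a))"
proof -
  let ?f = "to_nat_on A"
  have inj: "inj_on ?f A" using assms by (rule inj_on_to_nat_on)
  let ?r = "{(x,y). x \<in> A \<and> y \<in> A \<and> (?f x, ?f y) \<in> {(x,y). x \<le> y}}"
  have "well_order_on A ?r" by (rule wo_pull[OF nat_wo inj]) simp
  moreover have "finite (underS ?r a)" for a
  proof -
    have "?f ` underS ?r a \<subseteq> {..?f a}" by (auto simp: underS_def)
    then have "finite (?f ` underS ?r a)" using finite_subset by blast
    moreover have "inj_on ?f (underS ?r a)" using inj by (rule inj_on_subset) (auto simp: underS_def)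
    ultimately show ?thesis using finite_imageD by blast
  qed
  ultimately show ?thesis by blast
qed

lemma countable_card_le_aleph: "countable A \<Longrightarrow> card_le_aleph j A"
proof (induction j arbitrary: A)
  case 0
  then show ?case by simp
next
  case (Suc j)
  obtain r where "well_order_on A r" "\<forall>a\<in>A. finite (underS r a)" using countable_wo[OF Suc.prems] by blast
  moreover have "\<forall>a\<in>A. card_le_aleph j (underS r a)"
    using calculation(2) Suc.IH countable_finite by blast
  ultimately show ?case by (simp only: card_le_aleph.simps) blast
qed

lemma wo_lex:
  fixes L :: "'x set" and key :: "'x \<Rightarrow> 'k"
  assumes wo: "well_order_on A r" and keyA: "\<And>x. x \<in> L \<Longrightarrow> key x \<in> A"
    and ws: "\<And>a. a \<in> A \<Longrightarrow> well_order_on {x\<in>L. key x = a} (s a)"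
  shows "well_order_on L {(x,y). x \<in> L \<and> y \<in> L \<and> ((key x, key y) \<in> r \<and> key x \<noteq> key y \<or> key x = key y \<and> (x,y) \<in> s (key x))}"
    (is "well_order_on L ?r")
proof -
  have refl: "refl_on A r" and tr: "trans r" and as: "antisym r" and tot: "total_on A r" and wfr: "wf (r - Id)"
    using wo by (auto simp: well_order_on_def linear_order_on_def partial_order_on_def preorder_on_def)
  have sprops: "refl_on {x\<in>L. key x = a} (s a) \<and> trans (s a) \<and> antisym (s a) \<and> total_on {x\<in>L. key x = a} (s a)
      \<and> wf (s a - Id) \<and> s a \<subseteq> {x\<in>L. key x = a} \<times> {x\<in>L. key x = a}" if "a \<in> A" for a
    using ws[OF that] by (auto simp: well_order_on_def linear_order_on_def partial_order_on_def preorder_on_def)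
  have "linear_order_on L ?r"
    unfolding linear_order_on_def partial_order_on_def preorder_on_def
  proof (intro conjI)
    show "?r \<subseteq> L \<times> L" by auto
    show "refl_on L ?r" unfolding refl_on_def
    proof (intro conjI ballI)
      fix x assume x: "x \<in> L"
      then have "(x,x) \<in> s (key x)" using sprops[OF keyA[OF x]] by (auto simp: refl_on_def)
      then show "(x,x) \<in> ?r" using x by auto
    qed
    show "trans ?r" unfolding trans_def
    proof (intro allI impI)
      fix x y z assume xy: "(x,y) \<in> ?r" and yz: "(y,z) \<in> ?r"
      then have L: "x \<in> L" "y \<in> L" "z \<in> L" by auto
      show "(x,z) \<in> ?r"
      proof (cases "key x = key y")
        case True
        note xyk = True
        show ?thesis
        proof (cases "key y = key z")
          case True
          then have "(x,y) \<in> s (key x)" "(y,z) \<in> s (key x)" using xy yz xyk by auto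
          then have "(x,z) \<in> s (key x)" using sprops[OF keyA[OF L(1)]] by (meson transD)
          then show ?thesis using L xyk True by auto
        next
          case False
          then show ?thesis using L xyk yz by auto
        qed
      next
        case False
        note xyk = False
        then have r1: "(key x, key y) \<in> r" using xy by auto
        show ?thesis
        proof (cases "key y = key z")
          case True
          then show ?thesis using L xyk r1 by auto
        next
          case False
          then have r2: "(key y, key z) \<in> r" using yz by auto
          have "(key x, key z) \<in> r" using tr r1 r2 by (meson transD)
          moreover have "key x \<noteq> key z"
          proof
            assume "key x = key z"
            then have "(key y, key x) \<in> r" using r2 by simp
            then show False using as r1 xyk by (auto simp: antisym_def)
          qed
          ultimately show ?thesis using L by auto
        qed
      qed
    qed
    show "antisym ?r" unfolding antisym_def
    proof (intro allI impI)
      fix x y assume xy: "(x,y) \<in> ?r" and yx: "(y,x) \<in> ?r"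
      show "x = y"
      proof (cases "key x = key y")
        case True
        then have "(x,y) \<in> s (key x)" "(y,x) \<in> s (key x)" using xy yx by auto
        then show ?thesis using sprops[OF keyA, of x] xy by (auto simp: antisym_def)
      next
        case False
        then show ?thesis using xy yx as by (auto simp: antisym_def)
      qed
    qed
    show "total_on L ?r" unfolding total_on_def
    proof (intro ballI impI)
      fix x y assume x: "x \<in> L" and y: "y \<in> L" and ne: "x \<noteq> y"
      show "(x, y) \<in> ?r \<or> (y, x) \<in> ?r"
      proof (cases "key x = key y")
        case True
        then have "(x,y) \<in> s (key x) \<or> (y,x) \<in> s (key x)"
          using sprops[OF keyA[OF x]] x y ne by (auto simp: total_on_def)
        then show ?thesis using x y True by auto
      next
        case False
        then have "(key x, key y) \<in> r \<or> (key y, key x) \<in> r"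
          using tot keyA[OF x] keyA[OF y] by (auto simp: total_on_def)
        then show ?thesis using x y False by auto
      qed
    qed
  qed
  moreover have "wf (?r - Id)"
  proof (rule wfI_min)
    fix x :: 'x and Q assume xQ: "x \<in> Q"
    show "\<exists>z\<in>Q. \<forall>y. (y, z) \<in> ?r - Id \<longrightarrow> y \<notin> Q"
    proof (cases "x \<in> L")
      case False
      then show ?thesis using xQ by (intro bexI[of _ x]) auto
    next
      case True
      define Q' where "Q' = Q \<inter> L"
      have kx: "key x \<in> key ` Q'" using xQ True by (auto simp: Q'_def)
      obtain \<kappa> where \<kappa>: "\<kappa> \<in> key ` Q'" and \<kappa>min: "\<And>y. (y, \<kappa>) \<in> r - Id \<Longrightarrow> y \<notin> key ` Q'"
        using wfE_min[OF wfr kx] by blast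
      obtain x0 where x0: "x0 \<in> Q'" "key x0 = \<kappa>" using \<kappa> by auto
      have \<kappa>A: "\<kappa> \<in> A" using x0 keyA by (auto simp: Q'_def)
      have x0': "x0 \<in> {q \<in> Q'. key q = \<kappa>}" using x0 by auto
      have wfs: "wf (s \<kappa> - Id)" using sprops[OF \<kappa>A] by blast
      obtain z where z: "z \<in> {q \<in> Q'. key q = \<kappa>}" and zmin: "\<And>y. (y, z) \<in> s \<kappa> - Id \<Longrightarrow> y \<notin> {q \<in> Q'. key q = \<kappa>}"
        using wfE_min[OF wfs x0'] by blast
      show ?thesis
      proof (intro bexI[of _ z] allI impI)
        show "z \<in> Q" using z by (auto simp: Q'_def)
        fix y assume y: "(y, z) \<in> ?r - Id"
        show "y \<notin> Q"
        proof
          assume yQ: "y \<in> Q"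
          then have yQ': "y \<in> Q'" using y by (auto simp: Q'_def)
          show False
          proof (cases "key y = \<kappa>")
            case True
            then have "(y, z) \<in> s \<kappa> - Id" using y z by auto
            then show False using zmin yQ' True by blast
          next
            case False
            then have "(key y, \<kappa>) \<in> r - Id" using y z by auto
            then show False using \<kappa>min yQ' by blast
          qed
        qed
      qed
    qed
  qed
  ultimately show ?thesis unfolding well_order_on_def by blast
qed

definition free_F :: "((nat \<Rightarrow> 's) list \<Rightarrow> nat set) \<Rightarrow> (nat \<Rightarrow> 's) list set \<Rightarrow> bool" where
  "free_F F \<Lambda> \<longleftrightarrow> (\<exists>r. well_order_on \<Lambda> r \<and>
     (\<forall>\<eta>s\<in>\<Lambda>. \<exists>m\<in>F \<eta>s. \<exists>n. tup_restr \<eta>s m n \<notin> (\<lambda>\<nu>s. tup_restr \<nu>s m n) ` underS r \<eta>s))"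

lemma eventually_differ:
  assumes len: "length \<eta> = length \<nu>" and ne: "\<eta> \<noteq> \<nu>" and m: "m < length \<eta>"
  shows "\<exists>N. \<forall>n\<ge>N. tup_restr \<eta> m n \<noteq> tup_restr \<nu> m n"
proof -
  obtain l where l: "l < length \<eta>" "\<eta> ! l \<noteq> \<nu> ! l" using len ne nth_equalityI by blast
  show ?thesis
  proof (cases "l = m")
    case False
    have "tup_restr \<eta> m n \<noteq> tup_restr \<nu> m n" for n
    proof
      assume "tup_restr \<eta> m n = tup_restr \<nu> m n"
      then have "tup_restr \<eta> m n ! l = tup_restr \<nu> m n ! l" by simp
      then show False using l False len by (simp add: nth_tup_restr seq_full_eq_iff)
    qed
    then show ?thesis by blast
  next
    case True
    then obtain i where i: "(\<eta> ! m) i \<noteq> (\<nu> ! m) i" using l by auto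
    have "tup_restr \<eta> m n \<noteq> tup_restr \<nu> m n" if "n \<ge> Suc i" for n
    proof
      assume "tup_restr \<eta> m n = tup_restr \<nu> m n"
      then have "tup_restr \<eta> m n ! m = tup_restr \<nu> m n ! m" by simp
      then show False using m len i that by (simp add: nth_tup_restr seq_restr_eq_iff)
    qed
    then show ?thesis by blast
  qed
qed

lemma finite_differ:
  assumes "finite P" "\<eta> \<notin> P" "\<forall>\<nu>\<in>P. length \<nu> = length \<eta>" "m < length \<eta>"
  shows "\<exists>N. \<forall>n\<ge>N. \<forall>\<nu>\<in>P. tup_restr \<eta> m n \<noteq> tup_restr \<nu> m n"
  using assms
proof (induction P rule: finite_induct)
  case empty
  then show ?case by simp
next
  case (insert \<nu> P)
  obtain N1 where N1: "\<forall>n\<ge>N1. \<forall>\<nu>\<in>P. tup_restr \<eta> m n \<noteq> tup_restr \<nu> m n" using insert by auto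
  obtain N2 where N2: "\<forall>n\<ge>N2. tup_restr \<eta> m n \<noteq> tup_restr \<nu> m n"
    using eventually_differ[of \<eta> \<nu> m] insert.prems by auto
  show ?case using N1 N2 by (intro exI[of _ "max N1 N2"]) auto
qed

lemma base_case:
  assumes cnt: "countable \<Lambda>" and len: "\<forall>\<eta>\<in>\<Lambda>. length \<eta> = Suc k"
    and F: "\<forall>\<eta>\<in>\<Lambda>. F \<eta> \<subseteq> {0..k} \<and> F \<eta> \<noteq> {}"
  shows "free_F F \<Lambda>"
proof -
  obtain r where wo: "well_order_on \<Lambda> r" and fin: "\<forall>a\<in>\<Lambda>. finite (underS r a)" using countable_wo[OF cnt] by blast
  have sub: "r \<subseteq> \<Lambda> \<times> \<Lambda>" using wo by (auto simp: well_order_on_def linear_order_on_def partial_order_on_def preorder_on_def)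
  have "\<exists>m\<in>F \<eta>. \<exists>n. tup_restr \<eta> m n \<notin> (\<lambda>\<nu>. tup_restr \<nu> m n) ` underS r \<eta>" if \<eta>: "\<eta> \<in> \<Lambda>" for \<eta>
  proof -
    obtain m where m: "m \<in> F \<eta>" using F \<eta> by blast
    have mk: "m < length \<eta>" using m F \<eta> len by fastforce
    have "\<forall>\<nu>\<in>underS r \<eta>. length \<nu> = length \<eta>" using sub len \<eta> by (auto simp: underS_def)
    then obtain N where N: "\<forall>n\<ge>N. \<forall>\<nu>\<in>underS r \<eta>. tup_restr \<eta> m n \<noteq> tup_restr \<nu> m n"
      using finite_differ[of "underS r \<eta>" \<eta> m] fin \<eta> mk by (auto simp: underS_def)
    then have "tup_restr \<eta> m N \<notin> (\<lambda>\<nu>. tup_restr \<nu> m N) ` underS r \<eta>" by auto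
    then show ?thesis using m by blast
  qed
  then show ?thesis using wo by (auto simp: free_F_def)
qed

lemma main_free:
  "card_le_aleph j \<Lambda> \<Longrightarrow> (\<forall>\<eta>\<in>\<Lambda>. length \<eta> = Suc k) \<Longrightarrow>
   (\<forall>\<eta>\<in>\<Lambda>. F \<eta> \<subseteq> {0..k} \<and> Suc j \<le> card (F \<eta>)) \<Longrightarrow> free_F F \<Lambda>"
proof (induction j arbitrary: \<Lambda> F)
  case 0
  have "\<forall>\<eta>\<in>\<Lambda>. F \<eta> \<subseteq> {0..k} \<and> F \<eta> \<noteq> {}" using "0.prems"(3) by force
  then show ?case using base_case[of \<Lambda> k F] "0.prems" by simp
next
  case (Suc j)
  note len = Suc.prems(2)
  obtain r where wo: "well_order_on \<Lambda> r" and us: "\<forall>\<tau>\<in>\<Lambda>. card_le_aleph j (underS r \<tau>)"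
    using Suc.prems(1) by auto
  have refl: "refl_on \<Lambda> r" and tr: "trans r" and as: "antisym r" and tot: "total_on \<Lambda> r"
    and wfr: "wf (r - Id)" and sub: "r \<subseteq> \<Lambda> \<times> \<Lambda>"
    using wo by (auto simp: well_order_on_def linear_order_on_def partial_order_on_def preorder_on_def)
  define Co where "Co = (\<Union>\<eta>\<in>\<Lambda>. set \<eta>)"
  have \<rho>ex: "\<exists>t. t \<in> \<Lambda> \<and> x \<in> set t \<and> (\<forall>\<tau>\<in>\<Lambda>. x \<in> set \<tau> \<longrightarrow> (t, \<tau>) \<in> r)" if x: "x \<in> Co" for x
  proof -
    define Q where "Q = {\<tau>\<in>\<Lambda>. x \<in> set \<tau>}"
    obtain \<tau>0 where "\<tau>0 \<in> Q" using x by (auto simp: Co_def Q_def)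
    then obtain t where t: "t \<in> Q" and tmin: "\<And>y. (y, t) \<in> r - Id \<Longrightarrow> y \<notin> Q"
      using wfE_min[OF wfr] by blast
    have "(t, \<tau>) \<in> r" if "\<tau> \<in> Q" for \<tau>
    proof (cases "\<tau> = t")
      case True
      then show ?thesis using refl t by (auto simp: refl_on_def Q_def)
    next
      case False
      then show ?thesis using tot t that tmin[of \<tau>] by (auto simp: total_on_def Q_def)
    qed
    then show ?thesis using t by (auto simp: Q_def)
  qed
  have "\<forall>x\<in>Co. \<exists>t. t \<in> \<Lambda> \<and> x \<in> set t \<and> (\<forall>\<tau>\<in>\<Lambda>. x \<in> set \<tau> \<longrightarrow> (t, \<tau>) \<in> r)" using \<rho>ex by blast
  then obtain \<rho> where \<rho>0: "\<forall>x\<in>Co. \<rho> x \<in> \<Lambda> \<and> x \<in> set (\<rho> x) \<and> (\<forall>\<tau>\<in>\<Lambda>. x \<in> set \<tau> \<longrightarrow> (\<rho> x, \<tau>) \<in> r)"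
    by (rule bchoice[THEN exE]) blast
  have \<rho>: "\<And>x. x \<in> Co \<Longrightarrow> \<rho> x \<in> \<Lambda> \<and> x \<in> set (\<rho> x) \<and> (\<forall>\<tau>\<in>\<Lambda>. x \<in> set \<tau> \<longrightarrow> (\<rho> x, \<tau>) \<in> r)"
    using \<rho>0 by blast
  have Co_nth: "\<eta> ! l \<in> Co" if "\<eta> \<in> \<Lambda>" "l < Suc k" for \<eta> l
    using that len unfolding Co_def by (metis UN_I nth_mem)
  have keyex: "\<exists>l. l < Suc k \<and> (\<forall>l'<Suc k. (\<rho> (\<eta> ! l'), \<rho> (\<eta> ! l)) \<in> r)" if \<eta>: "\<eta> \<in> \<Lambda>" for \<eta>
  proof -
    define K where "K = (\<lambda>l. \<rho> (\<eta> ! l)) ` {..<Suc k}"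
    have "\<exists>\<kappa>\<in>K. \<forall>\<tau>\<in>K. (\<kappa>, \<tau>) \<notin> r - Id" by (rule finite_wf_maximal[OF wfr]) (auto simp: K_def)
    then obtain \<kappa> where \<kappa>: "\<kappa> \<in> K" and \<kappa>max: "\<And>\<tau>. \<tau> \<in> K \<Longrightarrow> (\<kappa>, \<tau>) \<notin> r - Id"
      by blast
    have KL: "K \<subseteq> \<Lambda>" using \<rho> Co_nth \<eta> by (auto simp: K_def)
    obtain l where l: "l < Suc k" "\<kappa> = \<rho> (\<eta> ! l)" using \<kappa> by (auto simp: K_def)
    have "(\<tau>, \<kappa>) \<in> r" if "\<tau> \<in> K" for \<tau>
    proof (cases "\<tau> = \<kappa>")
      case True
      then show ?thesis using refl KL that by (auto simp: refl_on_def)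
    next
      case False
      then show ?thesis using tot KL that \<kappa> \<kappa>max[OF that] by (auto simp: total_on_def)
    qed
    then show ?thesis using l by (intro exI[of _ l]) (auto simp: K_def)
  qed
  have "\<forall>\<eta>\<in>\<Lambda>. \<exists>l. l < Suc k \<and> (\<forall>l'<Suc k. (\<rho> (\<eta> ! l'), \<rho> (\<eta> ! l)) \<in> r)" using keyex by blast
  then obtain lc where lc0: "\<forall>\<eta>\<in>\<Lambda>. lc \<eta> < Suc k \<and> (\<forall>l'<Suc k. (\<rho> (\<eta> ! l'), \<rho> (\<eta> ! lc \<eta>)) \<in> r)"
    by (rule bchoice[THEN exE]) blast
  have lc: "\<And>\<eta>. \<eta> \<in> \<Lambda> \<Longrightarrow> lc \<eta> < Suc k \<and> (\<forall>l'<Suc k. (\<rho> (\<eta> ! l'), \<rho> (\<eta> ! lc \<eta>)) \<in> r)"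
    using lc0 by blast
  define key where "key = (\<lambda>\<eta>. \<rho> (\<eta> ! lc \<eta>))"
  have keyL: "key \<eta> \<in> \<Lambda>" if "\<eta> \<in> \<Lambda>" for \<eta>
    using \<rho> Co_nth lc that by (auto simp: key_def)
  define B where "B = (\<lambda>\<tau>. {\<eta>\<in>\<Lambda>. key \<eta> = \<tau>})"
  define F' where "F' = (\<lambda>\<eta>. F \<eta> - {lc \<eta>})"
  have Bsmall: "card_le_aleph j (B \<tau>)" if \<tau>: "\<tau> \<in> \<Lambda>" for \<tau>
  proof -
    define U where "U = underS r \<tau>"
    define X where "X = insert \<tau> U \<times> {..<Suc k}"
    define idx where "idx = (\<lambda>x. SOME c. c < length (\<rho> x) \<and> \<rho> x ! c = x)"
    have idx: "idx x < length (\<rho> x) \<and> \<rho> x ! idx x = x" if "x \<in> Co" for x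
    proof -
      have "\<exists>c. c < length (\<rho> x) \<and> \<rho> x ! c = x" using \<rho>[OF that] by (simp add: in_set_conv_nth)
      then show ?thesis unfolding idx_def by (rule someI_ex)
    qed
    define g where "g = (\<lambda>\<eta>. map (\<lambda>x. (\<rho> x, idx x)) \<eta>)"
    have dec: "map (\<lambda>(t, c). t ! c) (g \<eta>) = \<eta>" if "\<eta> \<in> \<Lambda>" for \<eta>
    proof -
      have "\<forall>x\<in>set \<eta>. x \<in> Co" using that by (auto simp: Co_def)
      then show ?thesis using idx by (auto simp: g_def intro: map_idI)
    qed
    have inj: "inj_on g (B \<tau>)"
      by (rule inj_onI) (metis (no_types, lifting) B_def dec mem_Collect_eq)
    have gX: "g ` B \<tau> \<subseteq> lists X"
    proof
      fix y assume "y \<in> g ` B \<tau>"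
      then obtain \<eta> where \<eta>: "\<eta> \<in> \<Lambda>" "key \<eta> = \<tau>" "y = g \<eta>" by (auto simp: B_def)
      have "(\<rho> x, idx x) \<in> X" if x: "x \<in> set \<eta>" for x
      proof -
        obtain l where l: "l < Suc k" "x = \<eta> ! l" using x len \<eta>(1) by (auto simp: in_set_conv_nth)
        have "(\<rho> x, \<tau>) \<in> r" using lc[OF \<eta>(1)] l \<eta>(2) by (auto simp: key_def)
        then have "\<rho> x \<in> insert \<tau> U" by (auto simp: U_def underS_def)
        moreover have "idx x < Suc k" using idx[of x] \<rho>[of x] Co_nth[OF \<eta>(1) l(1)] l len by auto
        ultimately show ?thesis by (simp add: X_def)
      qed
      then show "y \<in> lists X" using \<eta>(3) by (auto simp: g_def)
    qed
    show ?thesis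
    proof (cases "finite U")
      case True
      then have "countable (lists X)" by (auto simp: X_def intro: countable_finite)
      then have "countable (g ` B \<tau>)" using gX countable_subset by blast
      then have "countable (B \<tau>)" using countable_image_inj_on inj by blast
      then show ?thesis by (rule countable_card_le_aleph)
    next
      case False
      have inf: "\<not> finite (insert \<tau> U)" using False by simp
      have "\<exists>f. inj_on f (B \<tau>) \<and> f ` B \<tau> \<subseteq> lists X" using inj gX by blast
      then have l1: "|B \<tau>| \<le>o |lists X|" by (rule card_of_ordLeq[THEN iffD1])
      have iso: "|X| =o |insert \<tau> U|" unfolding X_def
        by (rule conjunct1[OF card_of_Times_infinite[OF inf]]) (auto intro: ordLess_imp_ordLeq[OF finite_ordLess_infinite2[OF _ inf]])
      have c: "|X| \<le>o |insert \<tau> U| \<and> |insert \<tau> U| \<le>o |X|" using ordIso_iff_ordLeq[THEN iffD1, OF iso] .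
      then have l3: "|X| \<le>o |insert \<tau> U|" by (rule conjunct1)
      have infX: "\<not> finite X"
      proof
        assume "finite X"
        then have "finite (insert \<tau> U)" by (rule card_of_ordLeq_finite[OF conjunct2[OF c]])
        then show False using inf by simp
      qed
      have l2: "|lists X| \<le>o |X|" using ordIso_iff_ordLeq[THEN iffD1, OF card_of_lists_infinite[OF infX]] by (rule conjunct1)
      have l4: "|insert \<tau> U| \<le>o |U|" using ordIso_iff_ordLeq[THEN iffD1, OF infinite_card_of_insert[OF False]] by (rule conjunct1)
      have "|B \<tau>| \<le>o |U|" using ordLeq_transitive[OF ordLeq_transitive[OF ordLeq_transitive[OF l1 l2] l3] l4] .
      from card_of_ordLeq[THEN iffD2, OF this] obtain f where f: "inj_on f (B \<tau>)" "f ` B \<tau> \<subseteq> U" by blast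
      have "card_le_aleph j U" using us \<tau> by (simp add: U_def)
      then show ?thesis by (rule card_le_aleph_inj[OF f])
    qed
  qed
  have IHB: "free_F F' (B \<tau>)" if \<tau>: "\<tau> \<in> \<Lambda>" for \<tau>
  proof (rule Suc.IH[OF Bsmall[OF \<tau>]])
    show "\<forall>\<eta>\<in>B \<tau>. length \<eta> = Suc k" using len by (auto simp: B_def)
    show "\<forall>\<eta>\<in>B \<tau>. F' \<eta> \<subseteq> {0..k} \<and> Suc j \<le> card (F' \<eta>)"
    proof
      fix \<eta> assume "\<eta> \<in> B \<tau>"
      then have \<eta>: "\<eta> \<in> \<Lambda>" by (auto simp: B_def)
      have F: "F \<eta> \<subseteq> {0..k}" "Suc (Suc j) \<le> card (F \<eta>)" using Suc.prems(3) \<eta> by auto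
      have "finite (F \<eta>)" using F(1) finite_subset by blast
      then have "card (F \<eta>) - 1 \<le> card (F' \<eta>)" by (auto simp: F'_def card_Diff_singleton_if)
      then show "F' \<eta> \<subseteq> {0..k} \<and> Suc j \<le> card (F' \<eta>)" using F by (auto simp: F'_def)
    qed
  qed
  obtain s where s: "\<And>\<tau>. \<tau> \<in> \<Lambda> \<Longrightarrow> well_order_on (B \<tau>) (s \<tau>) \<and> (\<forall>\<eta>\<in>B \<tau>. \<exists>m\<in>F' \<eta>. \<exists>n.
      tup_restr \<eta> m n \<notin> (\<lambda>\<nu>. tup_restr \<nu> m n) ` underS (s \<tau>) \<eta>)"
  proof -
    have "\<forall>\<tau>\<in>\<Lambda>. \<exists>s. well_order_on (B \<tau>) s \<and> (\<forall>\<eta>\<in>B \<tau>. \<exists>m\<in>F' \<eta>. \<exists>n.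
      tup_restr \<eta> m n \<notin> (\<lambda>\<nu>. tup_restr \<nu> m n) ` underS s \<eta>)" using IHB unfolding free_F_def by blast
    then obtain s where "\<forall>\<tau>\<in>\<Lambda>. well_order_on (B \<tau>) (s \<tau>) \<and> (\<forall>\<eta>\<in>B \<tau>. \<exists>m\<in>F' \<eta>. \<exists>n.
      tup_restr \<eta> m n \<notin> (\<lambda>\<nu>. tup_restr \<nu> m n) ` underS (s \<tau>) \<eta>)" by (rule bchoice[THEN exE]) blast
    then show ?thesis using that by blast
  qed
  define r' where "r' = {(x,y). x \<in> \<Lambda> \<and> y \<in> \<Lambda> \<and> ((key x, key y) \<in> r \<and> key x \<noteq> key y \<or> key x = key y \<and> (x,y) \<in> s (key x))}"
  have wo': "well_order_on \<Lambda> r'" unfolding r'_def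
    by (rule wo_lex[OF wo keyL]) (use s in \<open>auto simp: B_def\<close>)
  have "\<exists>m\<in>F \<eta>. \<exists>n. tup_restr \<eta> m n \<notin> (\<lambda>\<nu>. tup_restr \<nu> m n) ` underS r' \<eta>" if \<eta>: "\<eta> \<in> \<Lambda>" for \<eta>
  proof -
    define \<tau> where "\<tau> = key \<eta>"
    have \<tau>: "\<tau> \<in> \<Lambda>" "\<eta> \<in> B \<tau>" using keyL \<eta> by (auto simp: \<tau>_def B_def)
    obtain m n where m: "m \<in> F' \<eta>" and n: "tup_restr \<eta> m n \<notin> (\<lambda>\<nu>. tup_restr \<nu> m n) ` underS (s \<tau>) \<eta>"
      using s[OF \<tau>(1)] \<tau>(2) by blast
    have "tup_restr \<eta> m n \<notin> (\<lambda>\<nu>. tup_restr \<nu> m n) ` underS r' \<eta>"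
    proof
      assume "tup_restr \<eta> m n \<in> (\<lambda>\<nu>. tup_restr \<nu> m n) ` underS r' \<eta>"
      then obtain \<nu> where \<nu>: "\<nu> \<in> underS r' \<eta>" and e: "tup_restr \<nu> m n = tup_restr \<eta> m n" by auto
      have \<nu>L: "\<nu> \<in> \<Lambda>" and ne: "\<nu> \<noteq> \<eta>" using \<nu> by (auto simp: underS_def r'_def)
      show False
      proof (cases "key \<nu> = \<tau>")
        case True
        then have "\<nu> \<in> underS (s \<tau>) \<eta>" using \<nu> by (auto simp: underS_def r'_def \<tau>_def)
        then show False using n e by (metis image_eqI)
      next
        case False
        then have kr: "(key \<nu>, \<tau>) \<in> r" using \<nu> by (auto simp: underS_def r'_def \<tau>_def)
        define l where "l = lc \<eta>"
        have l: "l < Suc k" using lc[OF \<eta>] by (simp add: l_def)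
        have "m \<noteq> l" using m by (simp add: F'_def l_def)
        then have "tup_restr \<nu> m n ! l = tup_restr \<eta> m n ! l" using e by simp
        then have "\<nu> ! l = \<eta> ! l" using l len \<eta> \<nu>L \<open>m \<noteq> l\<close> by (simp add: nth_tup_restr seq_full_eq_iff)
        then have "\<rho> (\<nu> ! l) = \<tau>" by (simp add: \<tau>_def key_def l_def)
        moreover have "(\<rho> (\<nu> ! l), key \<nu>) \<in> r" using lc[OF \<nu>L] l by (simp add: key_def)
        ultimately have "(\<tau>, key \<nu>) \<in> r" by simp
        then show False using kr as False by (auto simp: antisym_def)
      qed
    qed
    moreover have "m \<in> F \<eta>" using m by (simp add: F'_def)
    ultimately show ?thesis by blast
  qed
  then show ?case using wo' by (auto simp: free_F_def)
qed


theorem claim1p13: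
  fixes k :: nat and S :: "'s set" and \<Lambda> :: "(nat \<Rightarrow> 's) list set"
    and a :: "(nat \<Rightarrow> 's) list \<Rightarrow> nat \<Rightarrow> int"
  assumes "comb_param k S \<Lambda>"
  shows "aleph_Suc_free k \<Lambda> \<and> (comb_free k \<Lambda> \<longrightarrow> free_abelian (G_x k \<Lambda> a))"
proof
  show "aleph_Suc_free k \<Lambda>" unfolding aleph_Suc_free_def
  proof (intro allI impI)
    fix \<Lambda>' assume A: "\<Lambda>' \<subseteq> \<Lambda> \<and> card_le_aleph k \<Lambda>'"
    have len: "\<forall>\<eta>\<in>\<Lambda>'. length \<eta> = Suc k" using assms A by (auto simp: comb_param_def)
    have F: "\<forall>\<eta>\<in>\<Lambda>'. (\<lambda>_. {0..k}) \<eta> \<subseteq> {0..k} \<and> Suc k \<le> card ((\<lambda>_. {0..k}) \<eta>)" by simp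
    have "free_F (\<lambda>_. {0..k}) \<Lambda>'" using main_free[where j=k and \<Lambda>="\<Lambda>'" and k=k and F="\<lambda>_. {0..k}"] A len F by blast
    then show "comb_free k \<Lambda>'" unfolding free_F_def comb_free_def
      by (metis atLeastAtMost_iff)
  qed
  show "comb_free k \<Lambda> \<longrightarrow> free_abelian (G_x k \<Lambda> a)" using part2[OF assms] by blast
qed

end
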